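(* For every $n\in\mathbb N$ there is an isomorphism of $\Bbbk\mathfrak S_n\otimes\Bbbk\mathbf{FA}^{\mathrm{op}}$-modules $$\hom_{\Bbbk\mathbf{FA}}(\overline P^{\otimes n},P^{\mathbf{FA}}_{\bullet})\;\cong\;\Bbbk\mathbf{FS}(\bullet,\mathbf n).$$ More precisely, the map $$\hom_{\Bbbk\mathbf{FA}}(P^{\mathbf{FA}}_{\mathbf n},P^{\mathbf{FA}}_{\mathbf t})\longrightarrow \hom_{\Bbbk\mathbf{FA}}(\overline P^{\otimes n},P^{\mathbf{FA}}_{\mathbf t})$$ given by restriction along the inclusion $\overline P^{\otimes n}\hookrightarrow P^{\mathbf{FA}}_{\mathbf n}$ is identified, via the Yoneda isomorphism $\hom_{\Bbbk\mathbf{FA}}(P^{\mathbf{FA}}_{\mathbf n},P^{\mathbf{FA}}_{\mathbf t})\cong\Bbbk\mathbf{FA}(\mathbf t,\mathbf n)$, with the surjection $\Bbbk\mathbf{FA}(\mathbf t,\mathbf n)\twoheadrightarrow\Bbbk\mathbf{FS}(\mathbf t,\mathbf n)$ that sends each surjective map to itself and each non-surjective map to $0$; this identification is natural in $\mathbf t\in\mathbf{FA}^{\mathrm{op}}$ and $\mathfrak S_n$-equivariant.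
   Context: Let $\Bbbk$ be a field. $\mathbf{FA}$ denotes the category of finite sets and all maps, and $\mathbf{FI}$, $\mathbf{FS}$, $\mathbf{FB}$ its wide subcategories of injections, surjections and bijections respectively; $\mathbf n=\{1,\dots,n\}$ for $n\in\mathbb N$ ($\mathbf 0=\emptyset$), and $\mathfrak S_n$ is the symmetric group. For a category $\mathcal C$, $\Bbbk\mathcal C(X,Y)$ is the $\Bbbk$-vector space with basis $\mathcal C(X,Y)$. A $\Bbbk\mathbf{FA}$-module is a functor from $\mathbf{FA}$ to $\Bbbk$-vector spaces (these form the abelian category $\mathcal F(\mathbf{FA})$); $\otimes$ denotes the pointwise tensor product over $\Bbbk$, and $\hom_{\Bbbk\mathbf{FA}}$ denotes natural transformations. $P^{\mathbf{FA}}_{\mathbf n}:=\Bbbk\mathbf{FA}(\mathbf n,-)$, so $P^{\mathbf{FA}}_{\mathbf n}(X)\cong\Bbbk[X]^{\otimes n}$ (where $\Bbbk[X]$ has basis $\{[x]:x\in X\}$), with the right $\mathfrak S_n$-action by precomposition, equivalently place permutation of tensor factors; write $P^{\mathbf{FA}}:=P^{\mathbf{FA}}_{\mathbf 1}$. Let $\overline{\Bbbk}$ be the functor with value $\Bbbk$ on non-empty sets (all maps acting by the identity) and $0$ on $\emptyset$, and $\Bbbk_{\mathbf 0}$ the functor with value $\Bbbk$ on $\emptyset$ and $0$ on non-empty sets. $\overline P$ is the kernel of the surjection $P^{\mathbf{FA}}\to\overline\Bbbk$, $[x]\mapsto 1$; thus $\overline P(X)=\{\sum_x a_x[x]:\sum_x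 a_x=0\}$. For $n\ge1$, $\overline P^{\otimes n}$ is the $n$-fold pointwise tensor power, a subfunctor of $P^{\mathbf{FA}}_{\mathbf n}$ stable under the place-permutation right action of $\mathfrak S_n$; by convention $\overline P^{\otimes 0}:=\overline\Bbbk$. $\Bbbk\mathbf{FS}(-,\mathbf n)$ is regarded as a $\Bbbk\mathbf{FA}^{\mathrm{op}}$-module (contravariant functor on $\mathbf{FA}$) as the quotient of $\Bbbk\mathbf{FA}(-,\mathbf n)$ by the span of non-surjective maps: for $h:Y\to X$ and a surjection $g:X\to\mathbf n$, $[g]\cdot h=[g\circ h]$ if $g\circ h$ is surjective and $0$ otherwise; $\mathfrak S_n$ acts by postcomposition. *)

theory Defs
  imports "HOL-Library.FuncSet"
begin

text \<open>We work over the skeleton of FA: objects are the sets {..<m} (m :: nat),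
  morphisms are extensional maps in {..<m} -> {..<m'} (extensional).
  An element of P_n(m) = k[{..<m}]^{\<otimes> n} = k[FA(n,m)] is a function
  (nat \<Rightarrow> nat) \<Rightarrow> 'k supported on maps n m.\<close>

definition maps :: "nat \<Rightarrow> nat \<Rightarrow> (nat \<Rightarrow> nat) set" where
  "maps a b = {..<a} \<rightarrow>\<^sub>E {..<b}"

definition surj_maps :: "nat \<Rightarrow> nat \<Rightarrow> (nat \<Rightarrow> nat) set" where
  "surj_maps a b = {f \<in> maps a b. f ` {..<a} = {..<b}}"

definition Pfree :: "nat \<Rightarrow> nat \<Rightarrow> ((nat \<Rightarrow> nat) \<Rightarrow> 'k::zero) set" where
  "Pfree n m = {v. \<forall>g. g \<notin> maps n m \<longrightarrow> v g = 0}"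

definition Pmap :: "nat \<Rightarrow> nat \<Rightarrow> (nat \<Rightarrow> nat) \<Rightarrow> ((nat \<Rightarrow> nat) \<Rightarrow> 'k::comm_monoid_add)
    \<Rightarrow> ((nat \<Rightarrow> nat) \<Rightarrow> 'k)" where
  "Pmap n m h v = (\<lambda>g'. \<Sum>g \<in> {g \<in> maps n m. restrict (h \<circ> g) {..<n} = g'}. v g)"

text \<open>Yoneda: a = sum_f a_f [f] in kFA(t,n) gives P_n \<Rightarrow> P_t, [g] \<mapsto> sum_f a_f [g o f].\<close>
definition Yon :: "nat \<Rightarrow> nat \<Rightarrow> ((nat \<Rightarrow> nat) \<Rightarrow> 'k::comm_semiring_1) \<Rightarrow> nat
    \<Rightarrow> ((nat \<Rightarrow> nat) \<Rightarrow> 'k) \<Rightarrow> ((nat \<Rightarrow> nat) \<Rightarrow> 'k)" where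
  "Yon t n a m v = (\<lambda>g'. \<Sum>g \<in> maps n m.
      \<Sum>f \<in> {f \<in> maps t n. restrict (g \<circ> f) {..<t} = g'}. a f * v g)"

definition Pbar :: "nat \<Rightarrow> (nat \<Rightarrow> 'k::comm_monoid_add) set" where
  "Pbar m = {u. (\<forall>x. x \<ge> m \<longrightarrow> u x = 0) \<and> (\<Sum>x<m. u x) = 0}"

definition tensor :: "nat \<Rightarrow> nat \<Rightarrow> (nat \<Rightarrow> nat \<Rightarrow> 'k::comm_semiring_1) \<Rightarrow> ((nat \<Rightarrow> nat) \<Rightarrow> 'k)" where
  "tensor n m u = (\<lambda>g. if g \<in> maps n m then (\<Prod>i<n. u i (g i)) else 0)"

text \<open>Pbar^{\<otimes> n}(m): span of elementary tensors of elements of Pbar(m);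
  by convention Pbar^{\<otimes> 0} = kbar, which is 0 on the empty set.\<close>
definition Pbar_pow :: "nat \<Rightarrow> nat \<Rightarrow> ((nat \<Rightarrow> nat) \<Rightarrow> 'k::comm_ring_1) set" where
  "Pbar_pow n m = (if m = 0 then {\<lambda>_. 0} else
     {v. \<exists>(N::nat) c us. (\<forall>j<N. \<forall>i<n. us j i \<in> Pbar m) \<and>
                  v = (\<lambda>g. \<Sum>j<N. c j * tensor n m (us j) g)})"

text \<open>Natural transformations Pbar^{\<otimes> n} \<Rightarrow> P_t (only values on Pbar_pow matter).\<close>
definition is_nat_trans :: "nat \<Rightarrow> nat \<Rightarrow>
    (nat \<Rightarrow> ((nat \<Rightarrow> nat) \<Rightarrow> 'k::comm_ring_1) \<Rightarrow> ((nat \<Rightarrow> nat) \<Rightarrow> 'k)) \<Rightarrow> bool" where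
  "is_nat_trans n t \<phi> \<longleftrightarrow>
     (\<forall>m. \<forall>v \<in> Pbar_pow n m. \<phi> m v \<in> Pfree t m) \<and>
     (\<forall>m v w. v \<in> Pbar_pow n m \<longrightarrow> w \<in> Pbar_pow n m \<longrightarrow>
         \<phi> m (\<lambda>g. v g + w g) = (\<lambda>g. \<phi> m v g + \<phi> m w g)) \<and>
     (\<forall>m c v. v \<in> Pbar_pow n m \<longrightarrow> \<phi> m (\<lambda>g. c * v g) = (\<lambda>g. c * \<phi> m v g)) \<and>
     (\<forall>m m' h v. h \<in> maps m m' \<longrightarrow> v \<in> Pbar_pow n m \<longrightarrow>
         \<phi> m' (Pmap n m h v) = Pmap t m h (\<phi> m v))"

definition fs_quot :: "nat \<Rightarrow> nat \<Rightarrow> ((nat \<Rightarrow> nat) \<Rightarrow> 'k::zero) \<Rightarrow> ((nat \<Rightarrow> nat) \<Rightarrow> 'k)" where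
  "fs_quot t n a = (\<lambda>f. if f \<in> surj_maps t n then a f else 0)"

end

theory Submission imports Defs begin

definition dl :: "nat \<Rightarrow> nat \<Rightarrow> 'k::comm_ring_1" where
  "dl x y = (if y = x then 1 else 0)"

lemma finite_maps[simp]: "finite (maps a b)"
  unfolding maps_def by (intro finite_PiE) auto

lemma maps_lt: "c \<in> maps t n \<Longrightarrow> i < t \<Longrightarrow> c i < n"
  using PiE_mem[of c "{..<t}" "\<lambda>_. {..<n}" i] unfolding maps_def by simp

lemma maps_ext: "c \<in> maps t n \<Longrightarrow> \<not> i < t \<Longrightarrow> c i = undefined"
  using PiE_arb[of c "{..<t}" "\<lambda>_. {..<n}" i] unfolding maps_def by simp

lemma maps_I: "(\<And>i. i < t \<Longrightarrow> c i < n) \<Longrightarrow> (\<And>i. \<not> i < t \<Longrightarrow> c i = undefined) \<Longrightarrow> c \<in> maps t n"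
  unfolding maps_def by (auto simp: PiE_iff extensional_def)

lemma maps_mono:
  assumes "c \<in> maps t n" "n \<le> n'"
  shows "c \<in> maps t n'"
proof -
  show ?thesis using maps_lt[OF assms(1)] maps_ext[OF assms(1)] assms(2)
    by (intro maps_I) (auto intro: less_le_trans)
qed

lemma maps_restrict_comp:
  assumes "h \<in> maps m m'" "g \<in> maps n m"
  shows "restrict (h \<circ> g) {..<n} \<in> maps n m'"
  using assms unfolding maps_def by (auto simp: PiE_iff)

lemma Pmap_tensor:
  fixes us :: "nat \<Rightarrow> nat \<Rightarrow> 'k::comm_ring_1"
  assumes h: "h \<in> maps m m'"
  shows "Pmap n m h (tensor n m us) = tensor n m' (\<lambda>i y. \<Sum>x\<in>{x. x<m \<and> h x = y}. us i x)"
proof (rule ext)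
  fix g'
  show "Pmap n m h (tensor n m us) g' = tensor n m' (\<lambda>i y. \<Sum>x\<in>{x. x<m \<and> h x = y}. us i x) g'"
  proof (cases "g' \<in> maps n m'")
    case True
    have F: "{g \<in> maps n m. restrict (h \<circ> g) {..<n} = g'} = PiE {..<n} (\<lambda>i. {x. x<m \<and> h x = g' i})"
    proof (intro set_eqI iffI)
      fix g assume "g \<in> {g \<in> maps n m. restrict (h \<circ> g) {..<n} = g'}"
      then have g: "g \<in> maps n m" and e: "restrict (h \<circ> g) {..<n} = g'" by auto
      have "h (g i) = g' i" if "i < n" for i
      proof -
        from e have "restrict (h \<circ> g) {..<n} i = g' i" by simp
        with that show ?thesis by simp
      qed
      then show "g \<in> PiE {..<n} (\<lambda>i. {x. x<m \<and> h x = g' i})"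
        using g unfolding maps_def by (auto simp: PiE_iff)
    next
      fix g assume g: "g \<in> PiE {..<n} (\<lambda>i. {x. x<m \<and> h x = g' i})"
      then have "g \<in> maps n m" unfolding maps_def by (auto simp: PiE_iff)
      moreover have "restrict (h \<circ> g) {..<n} = g'"
        using g True unfolding maps_def by (auto simp: PiE_iff restrict_def fun_eq_iff extensional_def)
      ultimately show "g \<in> {g \<in> maps n m. restrict (h \<circ> g) {..<n} = g'}" by simp
    qed
    have "Pmap n m h (tensor n m us) g' = (\<Sum>g\<in>PiE {..<n} (\<lambda>i. {x. x<m \<and> h x = g' i}). tensor n m us g)"
      unfolding Pmap_def F by simp
    also have "\<dots> = (\<Sum>g\<in>PiE {..<n} (\<lambda>i. {x. x<m \<and> h x = g' i}). \<Prod>i<n. us i (g i))"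
      by (rule sum.cong) (auto simp: tensor_def F[symmetric])
    also have "\<dots> = (\<Prod>i<n. \<Sum>x\<in>{x. x<m \<and> h x = g' i}. us i x)"
      by (rule prod_sum_PiE[symmetric]) auto
    finally show ?thesis using True by (simp add: tensor_def)
  next
    case False
    have E: "{g \<in> maps n m. restrict (h \<circ> g) {..<n} = g'} = {}"
      using maps_restrict_comp[OF h] False by auto
    show ?thesis using False unfolding Pmap_def E by (simp add: tensor_def)
  qed
qed

lemma tensor_cong:
  assumes "\<And>i y. i < n \<Longrightarrow> y < m \<Longrightarrow> us i y = us' i y"
  shows "tensor n m us = tensor n m us'"
  unfolding tensor_def
proof (rule ext)
  fix g
  show "(if g \<in> maps n m then \<Prod>i<n. us i (g i) else 0) = (if g \<in> maps n m then \<Prod>i<n. us' i (g i) else 0)"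
  proof (cases "g \<in> maps n m")
    case True
    then have "\<And>i. i < n \<Longrightarrow> g i < m" unfolding maps_def by auto
    then show ?thesis using True assms by (auto intro!: prod.cong)
  qed simp
qed

lemma sum_dl:
  assumes "finite A"
  shows "(\<Sum>x\<in>A. (dl i x :: 'k::comm_ring_1)) = (if i \<in> A then 1 else 0)"
  using assms by (simp add: dl_def sum.delta)

lemma Pmap_tensor_dl:
  assumes h: "h \<in> maps m m'" and pq: "\<And>i. i < n \<Longrightarrow> p i < m \<and> q i < m"
  shows "Pmap n m h (tensor n m (\<lambda>i y. (dl (p i) y - dl (q i) y :: 'k::comm_ring_1)))
       = tensor n m' (\<lambda>i y. dl (h (p i)) y - dl (h (q i)) y)"
  unfolding Pmap_tensor[OF h]
proof (rule tensor_cong)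
  fix i y assume i: "i < n"
  have f: "finite {x. x < m \<and> h x = y}" by simp
  show "(\<Sum>x\<in>{x. x < m \<and> h x = y}. (dl (p i) x - dl (q i) x :: 'k)) = dl (h (p i)) y - dl (h (q i)) y"
    using pq[OF i] by (simp add: sum_subtractf sum_dl[OF f]) (simp add: dl_def)
qed

lemma Pbar_dl: "i < m \<Longrightarrow> j < m \<Longrightarrow> (\<lambda>y. (dl i y - dl j y :: 'k::comm_ring_1)) \<in> Pbar m"
  unfolding Pbar_def by (auto simp: sum_subtractf sum_dl dl_def)

lemma Pbar_pow_zero: "(\<lambda>_. 0) \<in> Pbar_pow n m"
  unfolding Pbar_pow_def by (auto intro!: exI[of _ 0])

lemma sum_split_nat: fixes N1 N2 :: nat shows "(\<Sum>j<N1+N2. F j) = (\<Sum>j<N1. F j) + (\<Sum>j<N2. F (N1 + j))"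
  by (induct N2) (simp_all add: ac_simps)

lemma Pbar_pow_add:
  assumes "v \<in> Pbar_pow n m" "w \<in> Pbar_pow n m"
  shows "(\<lambda>g. v g + w g) \<in> Pbar_pow n m"
proof (cases "m = 0")
  case True then show ?thesis using assms unfolding Pbar_pow_def by simp
next
  case False
  have "\<exists>(N::nat) c us. (\<forall>j<N. \<forall>i<n. us j i \<in> Pbar m) \<and> v = (\<lambda>g. \<Sum>j<N. c j * tensor n m (us j) g)"
    using assms(1) False unfolding Pbar_pow_def by simp
  then obtain N1 c1 us1 where 1: "\<forall>j<(N1::nat). \<forall>i<n. us1 j i \<in> Pbar m"
      "v = (\<lambda>g. \<Sum>j<N1. c1 j * tensor n m (us1 j) g)"
    by (elim exE conjE) (rule that; assumption)
  have "\<exists>(N::nat) c us. (\<forall>j<N. \<forall>i<n. us j i \<in> Pbar m) \<and> w = (\<lambda>g. \<Sum>j<N. c j * tensor n m (us j) g)"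
    using assms(2) False unfolding Pbar_pow_def by simp
  then obtain N2 c2 us2 where 2: "\<forall>j<(N2::nat). \<forall>i<n. us2 j i \<in> Pbar m"
      "w = (\<lambda>g. \<Sum>j<N2. c2 j * tensor n m (us2 j) g)"
    by (elim exE conjE) (rule that; assumption)
  define c where "c j = (if j < N1 then c1 j else c2 (j - N1))" for j
  define us where "us j = (if j < N1 then us1 j else us2 (j - N1))" for j
  have A: "\<forall>j<N1+N2. \<forall>i<n. us j i \<in> Pbar m" using 1(1) 2(1) by (auto simp: us_def)
  have B: "(\<lambda>g. v g + w g) = (\<lambda>g. \<Sum>j<N1+N2. c j * tensor n m (us j) g)"
    unfolding sum_split_nat 1(2) 2(2) by (simp add: c_def us_def)
  show ?thesis unfolding Pbar_pow_def using False
    apply simp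
    apply (rule exI[of _ "N1+N2"], rule exI[of _ c], rule exI[of _ us])
    using A B by simp
qed

lemma Pbar_pow_smult:
  assumes "v \<in> Pbar_pow n m"
  shows "(\<lambda>g. c * v g) \<in> Pbar_pow n m"
proof (cases "m = 0")
  case True then show ?thesis using assms unfolding Pbar_pow_def by simp
next
  case False
  have "\<exists>(N::nat) c us. (\<forall>j<N. \<forall>i<n. us j i \<in> Pbar m) \<and> v = (\<lambda>g. \<Sum>j<N. c j * tensor n m (us j) g)"
    using assms(1) False unfolding Pbar_pow_def by simp
  then obtain N1 c1 us1 where 1: "\<forall>j<(N1::nat). \<forall>i<n. us1 j i \<in> Pbar m"
      "v = (\<lambda>g. \<Sum>j<N1. c1 j * tensor n m (us1 j) g)"
    by (elim exE conjE) (rule that; assumption)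
  have "(\<lambda>g. c * v g) = (\<lambda>g. \<Sum>j<N1. (c * c1 j) * tensor n m (us1 j) g)"
    unfolding 1 by (simp add: sum_distrib_left mult.assoc)
  then show ?thesis unfolding Pbar_pow_def using False
    apply simp
    apply (rule exI[of _ N1], rule exI[of _ "\<lambda>j. c * c1 j"], rule exI[of _ us1])
    using 1(1) by simp
qed

lemma Pbar_pow_tensor:
  assumes "0 < m" "\<And>i. i < n \<Longrightarrow> us i \<in> Pbar m"
  shows "tensor n m us \<in> Pbar_pow n m"
proof -
  have "tensor n m us = (\<lambda>g. \<Sum>j<(1::nat). 1 * tensor n m ((\<lambda>_. us) j) g)" by simp
  then show ?thesis using assms unfolding Pbar_pow_def
    by (auto intro!: exI[of _ "1::nat"] exI[of _ "\<lambda>_. 1"] exI[of _ "\<lambda>_. us"])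
qed

lemma Pbar_pow_sum:
  assumes "finite X" "\<And>x. x \<in> X \<Longrightarrow> v x \<in> Pbar_pow n m"
  shows "(\<lambda>g. \<Sum>x\<in>X. c x * v x g) \<in> Pbar_pow n m"
  using assms
proof (induction X rule: finite_induct)
  case empty then show ?case by (simp add: Pbar_pow_zero)
next
  case (insert x F)
  have "(\<lambda>g. \<Sum>x\<in>insert x F. c x * v x g) = (\<lambda>g. c x * v x g + (\<Sum>x\<in>F. c x * v x g))"
    using insert(1,2) by simp
  moreover have "(\<lambda>g. c x * v x g + (\<Sum>x\<in>F. c x * v x g)) \<in> Pbar_pow n m"
    by (intro Pbar_pow_add Pbar_pow_smult insert.IH) (auto intro: insert.prems)
  ultimately show ?case by simp
qed

lemma nt_Pfree: "is_nat_trans n t \<psi> \<Longrightarrow> v \<in> Pbar_pow n m \<Longrightarrow> \<psi> m v \<in> Pfree t m"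
  unfolding is_nat_trans_def by blast
lemma nt_add: "is_nat_trans n t \<psi> \<Longrightarrow> v \<in> Pbar_pow n m \<Longrightarrow> w \<in> Pbar_pow n m \<Longrightarrow>
   \<psi> m (\<lambda>g. v g + w g) = (\<lambda>g. \<psi> m v g + \<psi> m w g)"
  unfolding is_nat_trans_def by blast
lemma nt_smult: "is_nat_trans n t \<psi> \<Longrightarrow> v \<in> Pbar_pow n m \<Longrightarrow>
   \<psi> m (\<lambda>g. c * v g) = (\<lambda>g. c * \<psi> m v g)"
  unfolding is_nat_trans_def by blast
lemma nt_nat: "is_nat_trans n t \<psi> \<Longrightarrow> h \<in> maps m m' \<Longrightarrow> v \<in> Pbar_pow n m \<Longrightarrow>
   \<psi> m' (Pmap n m h v) = Pmap t m h (\<psi> m v)"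
  unfolding is_nat_trans_def by blast

lemma nt_zero:
  assumes "is_nat_trans n t \<psi>"
  shows "\<psi> m (\<lambda>_. 0) = (\<lambda>_. 0)"
  using nt_smult[OF assms Pbar_pow_zero, of m 0] by simp

lemma nt_sum:
  assumes nt: "is_nat_trans n t \<psi>" and "finite X" "\<And>x. x \<in> X \<Longrightarrow> v x \<in> Pbar_pow n m"
  shows "\<psi> m (\<lambda>g. \<Sum>x\<in>X. c x * v x g) = (\<lambda>g'. \<Sum>x\<in>X. c x * \<psi> m (v x) g')"
  using assms(2,3)
proof (induction X rule: finite_induct)
  case empty then show ?case by (simp add: nt_zero[OF nt])
next
  case (insert x F)
  have 1: "(\<lambda>g. c x * v x g) \<in> Pbar_pow n m" by (rule Pbar_pow_smult) (simp add: insert.prems)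
  have 2: "(\<lambda>g. \<Sum>x\<in>F. c x * v x g) \<in> Pbar_pow n m" by (rule Pbar_pow_sum) (auto simp: insert)
  have "\<psi> m (\<lambda>g. \<Sum>x\<in>insert x F. c x * v x g) = \<psi> m (\<lambda>g. c x * v x g + (\<Sum>x\<in>F. c x * v x g))"
    using insert by simp
  also have "\<dots> = (\<lambda>g'. \<psi> m (\<lambda>g. c x * v x g) g' + \<psi> m (\<lambda>g. \<Sum>x\<in>F. c x * v x g) g')"
    by (rule nt_add[OF nt 1 2])
  also have "\<dots> = (\<lambda>g'. \<Sum>x\<in>insert x F. c x * \<psi> m (v x) g')"
    using insert(1,2) nt_smult[OF nt insert.prems[of x], of "c x"] insert.IH insert.prems by simp
  finally show ?case .
qed

lemma Yon_Pfree: "Yon t n a m v \<in> Pfree t m"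
  unfolding Pfree_def
proof (intro CollectI allI impI)
  fix g' assume g': "g' \<notin> maps t m"
  have E: "{f \<in> maps t n. restrict (g \<circ> f) {..<t} = g'} = {}" if "g \<in> maps n m" for g
    using maps_restrict_comp[OF that] g' by auto
  show "Yon t n a m v g' = 0" unfolding Yon_def
  proof (rule sum.neutral, rule ballI)
    fix g assume "g \<in> maps n m"
    show "(\<Sum>f\<in>{f \<in> maps t n. restrict (g \<circ> f) {..<t} = g'}. a f * v g) = 0"
      unfolding E[OF \<open>g \<in> maps n m\<close>] by simp
  qed
qed

lemma Yon_add: "Yon t n a m (\<lambda>g. v g + w g) = (\<lambda>g'. Yon t n a m v g' + Yon t n a m w g')"
  unfolding Yon_def by (simp add: distrib_left sum.distrib)

lemma Yon_smult: "Yon t n a m (\<lambda>g. c * v g) = (\<lambda>g'. c * Yon t n a m v g')"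
  unfolding Yon_def by (simp add: sum_distrib_left mult.left_commute)

lemma restrict_comp_eq:
  assumes "f \<in> maps t n"
  shows "restrict (restrict (h \<circ> g) {..<n} \<circ> f) {..<t} = restrict (h \<circ> restrict (g \<circ> f) {..<t}) {..<t}"
  using assms unfolding maps_def by (auto simp: restrict_def fun_eq_iff PiE_iff)

lemma Yon_nat:
  fixes a :: "(nat \<Rightarrow> nat) \<Rightarrow> 'k::comm_ring_1"
  assumes h: "h \<in> maps m m'"
  shows "Yon t n a m' (Pmap n m h v) = Pmap t m h (Yon t n a m v)"
proof (rule ext)
  fix g'
  define Q where "Q g = (\<Sum>f\<in>{f\<in>maps t n. restrict (restrict (h \<circ> g) {..<n} \<circ> f) {..<t} = g'}. a f * v g)" for g
  have "Yon t n a m' (Pmap n m h v) g' = (\<Sum>g''\<in>maps n m'. \<Sum>g\<in>{g\<in>maps n m. restrict (h \<circ> g) {..<n} = g''}. Q g)"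
    unfolding Yon_def Pmap_def
  proof (rule sum.cong[OF refl])
    fix g'' assume "g'' \<in> maps n m'"
    have "(\<Sum>f\<in>{f \<in> maps t n. restrict (g'' \<circ> f) {..<t} = g'}. a f * (\<Sum>g\<in>{g \<in> maps n m. restrict (h \<circ> g) {..<n} = g''}. v g))
        = (\<Sum>g\<in>{g \<in> maps n m. restrict (h \<circ> g) {..<n} = g''}. \<Sum>f\<in>{f \<in> maps t n. restrict (g'' \<circ> f) {..<t} = g'}. a f * v g)"
      by (simp add: sum_distrib_left sum.swap[of _ "{f \<in> maps t n. restrict (g'' \<circ> f) {..<t} = g'}"])
    also have "\<dots> = (\<Sum>g\<in>{g \<in> maps n m. restrict (h \<circ> g) {..<n} = g''}. Q g)"
      unfolding Q_def by (rule sum.cong) auto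
    finally show "(\<Sum>f\<in>{f \<in> maps t n. restrict (g'' \<circ> f) {..<t} = g'}. a f * (\<Sum>g\<in>{g \<in> maps n m. restrict (h \<circ> g) {..<n} = g''}. v g))
        = (\<Sum>g\<in>{g \<in> maps n m. restrict (h \<circ> g) {..<n} = g''}. Q g)" .
  qed
  also have "\<dots> = (\<Sum>g\<in>maps n m. Q g)"
    by (rule sum.group) (auto intro: maps_restrict_comp[OF h])
  finally have L: "Yon t n a m' (Pmap n m h v) g' = (\<Sum>g\<in>maps n m. Q g)" .
  have R1: "(\<Sum>g0\<in>{g0 \<in> maps t m. restrict (h \<circ> g0) {..<t} = g'}. \<Sum>f\<in>{f \<in> maps t n. restrict (g \<circ> f) {..<t} = g0}. a f * v g) = Q g"
    if g: "g \<in> maps n m" for g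
  proof -
    define k where "k f = restrict (g \<circ> f) {..<t}" for f
    have "(\<Sum>g0\<in>{g0 \<in> maps t m. restrict (h \<circ> g0) {..<t} = g'}. \<Sum>f\<in>{f \<in> maps t n. k f = g0}. a f * v g)
      = (\<Sum>g0\<in>maps t m. if restrict (h \<circ> g0) {..<t} = g' then (\<Sum>f\<in>{f \<in> maps t n. k f = g0}. a f * v g) else 0)"
      by (rule sum.inter_filter) simp
    also have "\<dots> = (\<Sum>g0\<in>maps t m. \<Sum>f\<in>{f \<in> maps t n. k f = g0}. if restrict (h \<circ> k f) {..<t} = g' then a f * v g else 0)"
      by (rule sum.cong) auto
    also have "\<dots> = (\<Sum>f\<in>maps t n. if restrict (h \<circ> k f) {..<t} = g' then a f * v g else 0)"
      by (rule sum.group) (auto simp: k_def intro: maps_restrict_comp[OF g])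
    also have "\<dots> = (\<Sum>f\<in>{f\<in>maps t n. restrict (h \<circ> k f) {..<t} = g'}. a f * v g)"
      by (rule sum.inter_filter[symmetric]) simp
    also have "\<dots> = Q g"
      unfolding Q_def k_def by (rule sum.cong) (auto simp: restrict_comp_eq)
    finally show ?thesis unfolding k_def .
  qed
  have "Pmap t m h (Yon t n a m v) g' = (\<Sum>g\<in>maps n m. \<Sum>g0\<in>{g0 \<in> maps t m. restrict (h \<circ> g0) {..<t} = g'}. \<Sum>f\<in>{f \<in> maps t n. restrict (g \<circ> f) {..<t} = g0}. a f * v g)"
    unfolding Pmap_def Yon_def by (rule sum.swap)
  also have "\<dots> = (\<Sum>g\<in>maps n m. Q g)"
    by (rule sum.cong) (auto simp: R1)
  finally show "Yon t n a m' (Pmap n m h v) g' = Pmap t m h (Yon t n a m v) g'" using L by simp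
qed

lemma Yon_nt: "is_nat_trans n t (Yon t n (a :: (nat \<Rightarrow> nat) \<Rightarrow> 'k::comm_ring_1))"
  unfolding is_nat_trans_def
  by (simp add: Yon_Pfree Yon_add Yon_smult Yon_nat)

definition egen :: "nat \<Rightarrow> (nat \<Rightarrow> nat) \<Rightarrow> 'k::comm_ring_1" where
  "egen n = tensor n (Suc n) (\<lambda>i y. dl i y - dl n y)"

lemma egen_Pbar_pow: "egen n \<in> Pbar_pow n (Suc n)"
  unfolding egen_def by (rule Pbar_pow_tensor) (auto intro: Pbar_dl)

lemma Pmap_egen:
  assumes "h \<in> maps (Suc n) m'"
  shows "Pmap n (Suc n) h (egen n) = tensor n m' (\<lambda>i y. (dl (h i) y - dl (h n) y :: 'k::comm_ring_1))"
  unfolding egen_def by (rule Pmap_tensor_dl[OF assms]) auto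

lemma Pmap_zero: "Pmap n m h (\<lambda>_. 0 :: 'k::comm_ring_1) = (\<lambda>_. 0)"
  unfolding Pmap_def by simp

lemma Pmap_diff: "Pmap n m h (\<lambda>g. v g - w g :: 'k::comm_ring_1) = (\<lambda>g. Pmap n m h v g - Pmap n m h w g)"
  unfolding Pmap_def by (simp add: sum_subtractf)

lemma nt_diff:
  assumes "is_nat_trans n t \<psi>1" "is_nat_trans n t \<psi>2"
  shows "is_nat_trans n t (\<lambda>m v g. (\<psi>1 m v g - \<psi>2 m v g :: 'k::comm_ring_1))"
  unfolding is_nat_trans_def
proof (intro conjI allI impI ballI)
  fix m and v :: "(nat \<Rightarrow> nat) \<Rightarrow> 'k" assume v: "v \<in> Pbar_pow n m"
  show "(\<lambda>g. \<psi>1 m v g - \<psi>2 m v g) \<in> Pfree t m"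
    using nt_Pfree[OF assms(1) v] nt_Pfree[OF assms(2) v] unfolding Pfree_def by auto
next
  fix m and v w :: "(nat \<Rightarrow> nat) \<Rightarrow> 'k" assume v: "v \<in> Pbar_pow n m" and w: "w \<in> Pbar_pow n m"
  show "(\<lambda>g. \<psi>1 m (\<lambda>g. v g + w g) g - \<psi>2 m (\<lambda>g. v g + w g) g) =
          (\<lambda>g. \<psi>1 m v g - \<psi>2 m v g + (\<psi>1 m w g - \<psi>2 m w g))"
    using nt_add[OF assms(1) v w] nt_add[OF assms(2) v w] by (simp add: algebra_simps)
next
  fix m c and v :: "(nat \<Rightarrow> nat) \<Rightarrow> 'k" assume v: "v \<in> Pbar_pow n m"
  show "(\<lambda>g. \<psi>1 m (\<lambda>g. c * v g) g - \<psi>2 m (\<lambda>g. c * v g) g) = (\<lambda>g. c * (\<psi>1 m v g - \<psi>2 m v g))"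
    using nt_smult[OF assms(1) v] nt_smult[OF assms(2) v] by (simp add: algebra_simps)
next
  fix m m' h and v :: "(nat \<Rightarrow> nat) \<Rightarrow> 'k" assume h: "h \<in> maps m m'" and v: "v \<in> Pbar_pow n m"
  show "(\<lambda>g. \<psi>1 m' (Pmap n m h v) g - \<psi>2 m' (Pmap n m h v) g) =
          Pmap t m h (\<lambda>g. \<psi>1 m v g - \<psi>2 m v g)"
    unfolding Pmap_diff nt_nat[OF assms(1) h v] nt_nat[OF assms(2) h v] ..
qed

lemma tensor_zero_factor:
  assumes "i < n" "\<And>y. us i y = 0"
  shows "tensor n m us = (\<lambda>_. 0)"
  unfolding tensor_def using assms by (auto intro!: ext prod_zero bexI[of _ i])

lemma stepA:
  fixes \<psi> :: "nat \<Rightarrow> ((nat \<Rightarrow> nat) \<Rightarrow> 'k::comm_ring_1) \<Rightarrow> ((nat \<Rightarrow> nat) \<Rightarrow> 'k)"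
  assumes nt: "is_nat_trans n t \<psi>" and c: "c \<in> maps t n" and i: "i < n" "i \<notin> c ` {..<t}"
  shows "\<psi> (Suc n) (egen n) c = 0"
proof -
  define hi where "hi x = (if x = i then n else if x < Suc n then x else undefined)" for x
  have hi: "hi \<in> maps (Suc n) (Suc n)" unfolding maps_def hi_def using i(1) by (auto simp: PiE_iff extensional_def)
  have "Pmap n (Suc n) hi (egen n) = tensor n (Suc n) (\<lambda>j y. (dl (hi j) y - dl (hi n) y :: 'k))"
    by (rule Pmap_egen[OF hi])
  also have "\<dots> = (\<lambda>_. 0)"
    by (rule tensor_zero_factor[OF i(1)]) (use i in \<open>simp add: hi_def\<close>)
  finally have "Pmap t (Suc n) hi (\<psi> (Suc n) (egen n)) = (\<lambda>_. 0)"
    using nt_nat[OF nt hi egen_Pbar_pow] nt_zero[OF nt] by simp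
  then have 0: "Pmap t (Suc n) hi (\<psi> (Suc n) (egen n)) c = 0" by simp
  have F: "{c' \<in> maps t (Suc n). restrict (hi \<circ> c') {..<t} = c} = {c}"
  proof (intro set_eqI iffI)
    fix c' assume "c' \<in> {c' \<in> maps t (Suc n). restrict (hi \<circ> c') {..<t} = c}"
    then have c': "c' \<in> maps t (Suc n)" and e: "restrict (hi \<circ> c') {..<t} = c" by auto
    have "c' j = c j" if "j < t" for j
    proof -
      from e have "restrict (hi \<circ> c') {..<t} j = c j" by simp
      then have "hi (c' j) = c j" using that by simp
      moreover have "c j < n" "c j \<noteq> i" using c that i unfolding maps_def by auto
      moreover have "c' j < Suc n" using c' that unfolding maps_def by auto
      ultimately show ?thesis unfolding hi_def by (auto split: if_splits)
    qed
    moreover have "c' j = c j" if "j \<ge> t" for j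
      using c c' that unfolding maps_def by (auto simp: PiE_def extensional_def)
    ultimately show "c' \<in> {c}" by (auto intro: ext simp: not_less[symmetric])
  next
    fix c' assume "c' \<in> {c}"
    then have "c' = c" by simp
    moreover have "c \<in> maps t (Suc n)" using c by (rule maps_mono) simp
    moreover have "restrict (hi \<circ> c) {..<t} = c"
    proof (rule ext)
      fix j show "restrict (hi \<circ> c) {..<t} j = c j"
        using maps_lt[OF c, of j] maps_ext[OF c, of j] i unfolding hi_def by auto
    qed
    ultimately show "c' \<in> {c' \<in> maps t (Suc n). restrict (hi \<circ> c') {..<t} = c}" by simp
  qed
  show ?thesis using 0 unfolding Pmap_def F by simp
qed

definition kR :: "nat \<Rightarrow> nat set \<Rightarrow> nat \<Rightarrow> nat" where
  "kR n R x = (if x < n then (if x \<in> R then x else n) else if x = n then Suc n else undefined)"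

lemma kR_maps: "kR n R \<in> maps (Suc n) (Suc (Suc n))"
  by (rule maps_I) (auto simp: kR_def)

definition alpha :: "nat \<Rightarrow> nat \<Rightarrow> nat" where
  "alpha n x = (if x < Suc n then x else undefined)"

lemma alpha_maps: "alpha n \<in> maps (Suc n) (Suc (Suc n))"
  by (rule maps_I) (auto simp: alpha_def)

lemma relation_e:
  "Pmap n (Suc n) (alpha n) (egen n :: (nat \<Rightarrow> nat) \<Rightarrow> 'k::comm_ring_1)
   = (\<lambda>g. \<Sum>R\<in>Pow {..<n}. (-1) ^ (n - card R) * Pmap n (Suc n) (kR n R) (egen n) g)"
proof (rule ext)
  fix g :: "nat \<Rightarrow> nat"
  show "Pmap n (Suc n) (alpha n) (egen n :: (nat \<Rightarrow> nat) \<Rightarrow> 'k) g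
      = (\<Sum>R\<in>Pow {..<n}. (-1) ^ (n - card R) * Pmap n (Suc n) (kR n R) (egen n) g)"
    unfolding Pmap_egen[OF alpha_maps] Pmap_egen[OF kR_maps]
  proof (cases "g \<in> maps n (Suc (Suc n))")
    case False
    then show "tensor n (Suc (Suc n)) (\<lambda>i y. (dl (alpha n i) y - dl (alpha n n) y :: 'k)) g =
      (\<Sum>R\<in>Pow {..<n}. (- 1) ^ (n - card R) * tensor n (Suc (Suc n)) (\<lambda>i y. dl (kR n R i) y - dl (kR n R n) y) g)"
      by (simp add: tensor_def)
  next
    case True
    define f1 where "f1 i = (dl i (g i) - dl (Suc n) (g i) :: 'k)" for i
    define f2 where "f2 i = (dl n (g i) - dl (Suc n) (g i) :: 'k)" for i
    have "tensor n (Suc (Suc n)) (\<lambda>i y. (dl (alpha n i) y - dl (alpha n n) y :: 'k)) g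
        = (\<Prod>i<n. f1 i - f2 i)"
      using True by (simp add: tensor_def f1_def f2_def alpha_def)
    also have "\<dots> = (\<Sum>X\<in>Pow {..<n}. (-1) ^ (card {..<n} - card X) * (\<Prod>x\<in>X. f1 x) * (\<Prod>x\<in>{..<n}-X. f2 x))"
      by (rule prod_diff_conv_sum') simp
    also have "\<dots> = (\<Sum>R\<in>Pow {..<n}. (- 1) ^ (n - card R) * tensor n (Suc (Suc n)) (\<lambda>i y. dl (kR n R i) y - dl (kR n R n) y) g)"
    proof (rule sum.cong[OF refl])
      fix R assume R: "R \<in> Pow {..<n}"
      have "tensor n (Suc (Suc n)) (\<lambda>i y. dl (kR n R i) y - dl (kR n R n) y) g
          = (\<Prod>i<n. if i \<in> R then f1 i else f2 i)"
        using True unfolding tensor_def f1_def f2_def kR_def by (auto intro!: prod.cong)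
      also have "\<dots> = (\<Prod>x\<in>R. f1 x) * (\<Prod>x\<in>{..<n}-R. f2 x)"
        using R by (simp add: prod.If_cases Int_absorb1 Diff_eq)
      finally show "(-1) ^ (card {..<n} - card R) * (\<Prod>x\<in>R. f1 x) * (\<Prod>x\<in>{..<n}-R. f2 x)
          = (- 1) ^ (n - card R) * tensor n (Suc (Suc n)) (\<lambda>i y. dl (kR n R i) y - dl (kR n R n) y) g"
        by simp
    qed
    finally show "tensor n (Suc (Suc n)) (\<lambda>i y. (dl (alpha n i) y - dl (alpha n n) y :: 'k)) g =
      (\<Sum>R\<in>Pow {..<n}. (- 1) ^ (n - card R) * tensor n (Suc (Suc n)) (\<lambda>i y. dl (kR n R i) y - dl (kR n R n) y) g)" .
  qed
qed

lemma stepB: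
  fixes \<psi> :: "nat \<Rightarrow> ((nat \<Rightarrow> nat) \<Rightarrow> 'k::comm_ring_1) \<Rightarrow> ((nat \<Rightarrow> nat) \<Rightarrow> 'k)"
  assumes nt: "is_nat_trans n t \<psi>" and z: "\<And>c. c \<in> maps t n \<Longrightarrow> \<psi> (Suc n) (egen n) c = 0"
  shows "\<psi> (Suc n) (egen n) = (\<lambda>_. 0)"
proof (rule ext)
  fix c
  define w where "w = \<psi> (Suc n) (egen n)"
  have wP: "w \<in> Pfree t (Suc n)" unfolding w_def by (rule nt_Pfree[OF nt egen_Pbar_pow])
  have kP: "Pmap n (Suc n) (kR n R) (egen n) \<in> Pbar_pow n (Suc (Suc n))" for R
    unfolding Pmap_egen[OF kR_maps] by (rule Pbar_pow_tensor) (auto intro!: Pbar_dl simp: kR_def)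
  have "Pmap t (Suc n) (alpha n) w = \<psi> (Suc (Suc n)) (Pmap n (Suc n) (alpha n) (egen n))"
    unfolding w_def by (rule nt_nat[OF nt alpha_maps egen_Pbar_pow, symmetric])
  also have "\<dots> = (\<lambda>g'. \<Sum>R\<in>Pow {..<n}. (-1) ^ (n - card R) * \<psi> (Suc (Suc n)) (Pmap n (Suc n) (kR n R) (egen n)) g')"
    unfolding relation_e by (rule nt_sum[OF nt]) (auto intro: kP)
  also have "\<dots> = (\<lambda>g'. \<Sum>R\<in>Pow {..<n}. (-1) ^ (n - card R) * Pmap t (Suc n) (kR n R) w g')"
    unfolding w_def nt_nat[OF nt kR_maps egen_Pbar_pow] ..
  finally have rel: "Pmap t (Suc n) (alpha n) w = (\<lambda>g'. \<Sum>R\<in>Pow {..<n}. (-1) ^ (n - card R) * Pmap t (Suc n) (kR n R) w g')" .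
  show "\<psi> (Suc n) (egen n) c = 0"
  proof (cases "c \<in> maps t (Suc n)")
    case False
    then show ?thesis using wP unfolding w_def Pfree_def by auto
  next
    case True
    have F: "{c' \<in> maps t (Suc n). restrict (alpha n \<circ> c') {..<t} = c} = {c}"
    proof -
      have "restrict (alpha n \<circ> c') {..<t} = c'" if "c' \<in> maps t (Suc n)" for c'
      proof (rule ext)
        fix j show "restrict (alpha n \<circ> c') {..<t} j = c' j"
          using maps_lt[OF that, of j] maps_ext[OF that, of j] by (auto simp: alpha_def)
      qed
      then show ?thesis using True by auto
    qed
    have 1: "Pmap t (Suc n) (alpha n) w c = w c" unfolding Pmap_def F by simp
    have 2: "Pmap t (Suc n) (kR n R) w c = 0" for R
      unfolding Pmap_def
    proof (rule sum.neutral, rule ballI)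
      fix c' assume "c' \<in> {c' \<in> maps t (Suc n). restrict (kR n R \<circ> c') {..<t} = c}"
      then have c': "c' \<in> maps t (Suc n)" and e: "restrict (kR n R \<circ> c') {..<t} = c" by auto
      have "c' j < n" if j: "j < t" for j
      proof (rule ccontr)
        assume "\<not> c' j < n"
        with maps_lt[OF c' j] have "c' j = n" by simp
        then have "kR n R (c' j) = Suc n" by (simp add: kR_def)
        moreover have "restrict (kR n R \<circ> c') {..<t} j = c j" using e by simp
        ultimately have "c j = Suc n" using j by simp
        with maps_lt[OF True j] show False by simp
      qed
      then have "c' \<in> maps t n" using maps_ext[OF c'] by (intro maps_I) auto
      then show "w c' = 0" using z unfolding w_def by simp
    qed
    have "w c = 0" using fun_cong[OF rel, of c] 1 2 by simp
    then show ?thesis unfolding w_def .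
  qed
qed

lemma maps_PiE: "maps n m = PiE {..<n} (\<lambda>_. {..<m})"
  unfolding maps_def ..

lemma tensor_expand:
  fixes us :: "nat \<Rightarrow> nat \<Rightarrow> 'k::comm_ring_1"
  assumes m: "0 < m" and us: "\<And>i. i < n \<Longrightarrow> us i \<in> Pbar m"
  shows "tensor n m us = (\<lambda>g. \<Sum>p\<in>maps n m. (\<Prod>i<n. us i (p i)) * tensor n m (\<lambda>i y. dl (p i) y - dl 0 y) g)"
proof (rule ext)
  fix g
  show "tensor n m us g = (\<Sum>p\<in>maps n m. (\<Prod>i<n. us i (p i)) * tensor n m (\<lambda>i y. dl (p i) y - dl 0 y) g)"
  proof (cases "g \<in> maps n m")
    case False then show ?thesis by (simp add: tensor_def)
  next
    case True
    have s: "(\<Sum>x<m. us i x * (dl x (g i) - dl 0 (g i))) = us i (g i)" if i: "i < n" for i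
    proof -
      have sum0: "(\<Sum>x<m. us i x) = 0" using us[OF i] unfolding Pbar_def by simp
      have "(\<Sum>x<m. us i x * (dl x (g i) - dl 0 (g i))) = (\<Sum>x<m. us i x * dl x (g i)) - (\<Sum>x<m. us i x) * dl 0 (g i)"
        by (simp add: right_diff_distrib sum_subtractf sum_distrib_right)
      also have "(\<Sum>x<m. us i x * dl x (g i)) = us i (g i)"
        using maps_lt[OF True i] by (simp add: dl_def if_distrib cong: if_cong)
      finally show ?thesis using sum0 by simp
    qed
    have "(\<Sum>p\<in>maps n m. (\<Prod>i<n. us i (p i)) * tensor n m (\<lambda>i y. dl (p i) y - dl 0 y) g)
        = (\<Sum>p\<in>PiE {..<n} (\<lambda>_. {..<m}). \<Prod>i<n. us i (p i) * (dl (p i) (g i) - dl 0 (g i)))"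
      unfolding maps_PiE using True by (simp add: tensor_def prod.distrib maps_PiE)
    also have "\<dots> = (\<Prod>i<n. \<Sum>x<m. us i x * (dl x (g i) - dl 0 (g i)))"
      by (rule prod_sum_PiE[symmetric]) auto
    also have "\<dots> = (\<Prod>i<n. us i (g i))"
      by (rule prod.cong) (auto simp: s)
    finally show ?thesis using True by (simp add: tensor_def)
  qed
qed

lemma stepC:
  fixes \<psi> :: "nat \<Rightarrow> ((nat \<Rightarrow> nat) \<Rightarrow> 'k::comm_ring_1) \<Rightarrow> ((nat \<Rightarrow> nat) \<Rightarrow> 'k)"
  assumes nt: "is_nat_trans n t \<psi>" and z: "\<psi> (Suc n) (egen n) = (\<lambda>_. 0)"
    and v: "v \<in> Pbar_pow n m"
  shows "\<psi> m v = (\<lambda>_. 0)"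
proof (cases "m = 0")
  case True
  then have "v = (\<lambda>_. 0)" using v unfolding Pbar_pow_def by simp
  then show ?thesis using nt_zero[OF nt] by simp
next
  case False
  then have m: "0 < m" by simp
  define hp where "hp p x = (if x < n then p x else if x = n then 0 else undefined)" for p :: "nat \<Rightarrow> nat" and x
  have hp: "hp p \<in> maps (Suc n) m" if "p \<in> maps n m" for p
    using maps_lt[OF that] m by (intro maps_I) (auto simp: hp_def)
  have T0: "\<psi> m (tensor n m us) = (\<lambda>_. 0)" if us: "\<And>i. i < n \<Longrightarrow> us i \<in> Pbar m" for us
  proof -
    have P: "Pmap n (Suc n) (hp p) (egen n) = tensor n m (\<lambda>i y. dl (p i) y - dl 0 y)" if "p \<in> maps n m" for p
      unfolding Pmap_egen[OF hp[OF that]] by (rule tensor_cong) (simp add: hp_def)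
    have PP: "Pmap n (Suc n) (hp p) (egen n) \<in> Pbar_pow n m" if "p \<in> maps n m" for p
      unfolding P[OF that] by (rule Pbar_pow_tensor[OF m]) (intro Pbar_dl m maps_lt[OF that])
    have "tensor n m us = (\<lambda>g. \<Sum>p\<in>maps n m. (\<Prod>i<n. us i (p i)) * tensor n m (\<lambda>i y. dl (p i) y - dl 0 y) g)"
      by (rule tensor_expand[OF m us])
    also have "\<dots> = (\<lambda>g. \<Sum>p\<in>maps n m. (\<Prod>i<n. us i (p i)) * Pmap n (Suc n) (hp p) (egen n) g)"
      by (intro ext sum.cong refl) (simp add: P)
    finally have "tensor n m us = (\<lambda>g. \<Sum>p\<in>maps n m. (\<Prod>i<n. us i (p i)) * Pmap n (Suc n) (hp p) (egen n) g)" .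
    then have "\<psi> m (tensor n m us) = (\<lambda>g'. \<Sum>p\<in>maps n m. (\<Prod>i<n. us i (p i)) * \<psi> m (Pmap n (Suc n) (hp p) (egen n)) g')"
      by (simp only:) (rule nt_sum[OF nt], simp, rule PP)
    also have "\<dots> = (\<lambda>_. 0)"
      by (intro ext sum.neutral ballI) (simp add: nt_nat[OF nt hp egen_Pbar_pow] z Pmap_zero)
    finally show ?thesis .
  qed
  have "\<exists>(N::nat) c us. (\<forall>j<N. \<forall>i<n. us j i \<in> Pbar m) \<and> v = (\<lambda>g. \<Sum>j<N. c j * tensor n m (us j) g)"
    using v False unfolding Pbar_pow_def by simp
  then obtain N c us where 1: "\<forall>j<(N::nat). \<forall>i<n. us j i \<in> Pbar m"
      "v = (\<lambda>g. \<Sum>j<N. c j * tensor n m (us j) g)"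
    by (elim exE conjE) (rule that; assumption)
  have "\<psi> m v = (\<lambda>g'. \<Sum>j<N. c j * \<psi> m (tensor n m (us j)) g')"
    unfolding 1(2) by (rule nt_sum[OF nt]) (use 1(1) m in \<open>auto intro: Pbar_pow_tensor\<close>)
  also have "\<dots> = (\<lambda>_. 0)"
    using 1(1) T0 by (intro ext sum.neutral ballI) simp
  finally show ?thesis .
qed

lemma core:
  fixes \<psi> :: "nat \<Rightarrow> ((nat \<Rightarrow> nat) \<Rightarrow> 'k::comm_ring_1) \<Rightarrow> ((nat \<Rightarrow> nat) \<Rightarrow> 'k)"
  assumes nt: "is_nat_trans n t \<psi>" and z: "\<And>c. c \<in> surj_maps t n \<Longrightarrow> \<psi> (Suc n) (egen n) c = 0"
    and v: "v \<in> Pbar_pow n m"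
  shows "\<psi> m v = (\<lambda>_. 0)"
proof -
  have "\<psi> (Suc n) (egen n) c = 0" if c: "c \<in> maps t n" for c
  proof (cases "c \<in> surj_maps t n")
    case True then show ?thesis by (rule z)
  next
    case False
    then have ne: "c ` {..<t} \<noteq> {..<n}" using c unfolding surj_maps_def by simp
    have "c ` {..<t} \<subseteq> {..<n}" using maps_lt[OF c] by auto
    with ne obtain i where "i < n" "i \<notin> c ` {..<t}" by blast
    then show ?thesis by (rule stepA[OF nt c])
  qed
  then have "\<psi> (Suc n) (egen n) = (\<lambda>_. 0)" by (rule stepB[OF nt])
  then show ?thesis by (rule stepC[OF nt _ v])
qed

lemma egen_val: "egen n g = (if g \<in> maps n (Suc n) then (\<Prod>i<n. dl i (g i) - dl n (g i)) else (0::'k::comm_ring_1))"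
  unfolding egen_def tensor_def ..

lemma Yon_e:
  fixes a :: "(nat \<Rightarrow> nat) \<Rightarrow> 'k::comm_ring_1"
  assumes c: "c \<in> surj_maps t n"
  shows "Yon t n a (Suc n) (egen n) c = a c"
proof -
  have cm: "c \<in> maps t n" and cs: "c ` {..<t} = {..<n}" using c unfolding surj_maps_def by auto
  define io where "io x = (if x < n then x else (undefined::nat))" for x
  have io: "io \<in> maps n (Suc n)" by (rule maps_I) (auto simp: io_def)
  have inner: "(\<Sum>f\<in>{f \<in> maps t n. restrict (g \<circ> f) {..<t} = c}. a f * egen n g) = (if io = g then a c else 0)"
    if g: "g \<in> maps n (Suc n)" for g
  proof (cases "g = io")
    case True
    have e1: "egen n io = (1::'k)" using io unfolding egen_val by (simp add: io_def dl_def)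
    have "restrict (io \<circ> f) {..<t} = f" if "f \<in> maps t n" for f
    proof (rule ext)
      fix j show "restrict (io \<circ> f) {..<t} j = f j"
        using maps_lt[OF that, of j] maps_ext[OF that, of j] by (auto simp: io_def)
    qed
    then have "{f \<in> maps t n. restrict (io \<circ> f) {..<t} = c} = {c}" using cm by auto
    then show ?thesis using True e1 by simp
  next
    case False
    have "egen n g = (0::'k)" if f: "f \<in> maps t n" and e: "restrict (g \<circ> f) {..<t} = c" for f
    proof (rule ccontr)
      assume nz: "egen n g \<noteq> (0::'k)"
      have gi: "g i = i \<or> g i = n" if i: "i < n" for i
      proof (rule ccontr)
        assume "\<not> (g i = i \<or> g i = n)"
        then have "(dl i (g i) - dl n (g i) :: 'k) = 0" by (simp add: dl_def)
        then have "(\<Prod>i<n. dl i (g i) - dl n (g i) :: 'k) = 0" using i by (intro prod_zero) auto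
        then show False using nz g unfolding egen_val by simp
      qed
      have "g i = io i" for i
      proof (cases "i < n")
        case True
        then obtain j where j: "j < t" "c j = i" using cs by (metis imageE lessThan_iff)
        have "restrict (g \<circ> f) {..<t} j = c j" using e by simp
        then have gf: "g (f j) = i" using j by simp
        have fj: "f j < n" by (rule maps_lt[OF f j(1)])
        from gi[OF fj] gf True have "f j = i" by auto
        with gf True show ?thesis by (simp add: io_def)
      next
        case False
        then show ?thesis using maps_ext[OF g, of i] by (simp add: io_def)
      qed
      then have "g = io" by (rule ext)
      with \<open>g \<noteq> io\<close> show False by simp
    qed
    then have "(\<Sum>f\<in>{f \<in> maps t n. restrict (g \<circ> f) {..<t} = c}. a f * egen n g) = 0"
      by (intro sum.neutral) auto
    then show ?thesis using False by auto
  qed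
  have "Yon t n a (Suc n) (egen n) c = (\<Sum>g\<in>maps n (Suc n). if io = g then a c else 0)"
    unfolding Yon_def by (rule sum.cong) (auto simp: inner)
  also have "\<dots> = a c" using io by simp
  finally show ?thesis .
qed

theorem mainTheorem1:
  fixes n t :: nat
  shows "(\<forall>\<phi> :: nat \<Rightarrow> ((nat \<Rightarrow> nat) \<Rightarrow> 'k::field) \<Rightarrow> ((nat \<Rightarrow> nat) \<Rightarrow> 'k).
            is_nat_trans n t \<phi> \<longrightarrow>
            (\<exists>a \<in> Pfree t n. \<forall>m. \<forall>v \<in> Pbar_pow n m. \<phi> m v = Yon t n a m v))
       \<and> (\<forall>a :: (nat \<Rightarrow> nat) \<Rightarrow> 'k. a \<in> Pfree t n \<longrightarrow>
            ((\<forall>m. \<forall>v \<in> Pbar_pow n m. Yon t n a m v = (\<lambda>_. 0))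
             \<longleftrightarrow> fs_quot t n a = (\<lambda>_. 0)))"
proof (intro conjI allI impI)
  fix \<phi> :: "nat \<Rightarrow> ((nat \<Rightarrow> nat) \<Rightarrow> 'k::field) \<Rightarrow> ((nat \<Rightarrow> nat) \<Rightarrow> 'k)"
  assume nt: "is_nat_trans n t \<phi>"
  define a where "a f = (if f \<in> maps t n then \<phi> (Suc n) (egen n) f else 0)" for f
  have aP: "a \<in> Pfree t n" unfolding Pfree_def a_def by simp
  have nt2: "is_nat_trans n t (\<lambda>m v g. \<phi> m v g - Yon t n a m v g)"
    by (rule nt_diff[OF nt Yon_nt])
  have "\<forall>m. \<forall>v \<in> Pbar_pow n m. \<phi> m v = Yon t n a m v"
  proof (intro allI ballI)
    fix m and v :: "(nat \<Rightarrow> nat) \<Rightarrow> 'k" assume v: "v \<in> Pbar_pow n m"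
    have "(\<lambda>g. \<phi> m v g - Yon t n a m v g) = (\<lambda>_. 0)"
    proof (rule core[OF nt2 _ v])
      fix c assume c: "c \<in> surj_maps t n"
      then have "c \<in> maps t n" unfolding surj_maps_def by simp
      then show "\<phi> (Suc n) (egen n) c - Yon t n a (Suc n) (egen n) c = 0"
        unfolding Yon_e[OF c] by (simp add: a_def)
    qed
    then show "\<phi> m v = Yon t n a m v" by (intro ext) (metis right_minus_eq)
  qed
  then show "\<exists>a \<in> Pfree t n. \<forall>m. \<forall>v \<in> Pbar_pow n m. \<phi> m v = Yon t n a m v" using aP by blast
next
  fix a :: "(nat \<Rightarrow> nat) \<Rightarrow> 'k::field"
  assume aP: "a \<in> Pfree t n"
  show "(\<forall>m. \<forall>v \<in> Pbar_pow n m. Yon t n a m v = (\<lambda>_. 0)) \<longleftrightarrow> fs_quot t n a = (\<lambda>_. 0)"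
  proof
    assume H: "\<forall>m. \<forall>v \<in> Pbar_pow n m. Yon t n a m v = (\<lambda>_. 0)"
    then have Z: "Yon t n a (Suc n) (egen n) = (\<lambda>_. 0)" using egen_Pbar_pow by blast
    show "fs_quot t n a = (\<lambda>_. 0)"
    proof (rule ext)
      fix f show "fs_quot t n a f = 0"
      proof (cases "f \<in> surj_maps t n")
        case True
        then show ?thesis using Yon_e[OF True, of a] Z unfolding fs_quot_def by simp
      qed (simp add: fs_quot_def)
    qed
  next
    assume H: "fs_quot t n a = (\<lambda>_. 0)"
    show "\<forall>m. \<forall>v \<in> Pbar_pow n m. Yon t n a m v = (\<lambda>_. 0)"
    proof (intro allI ballI)
      fix m and v :: "(nat \<Rightarrow> nat) \<Rightarrow> 'k" assume v: "v \<in> Pbar_pow n m"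
      show "Yon t n a m v = (\<lambda>_. 0)"
      proof (rule core[OF Yon_nt _ v])
        fix c assume c: "c \<in> surj_maps t n"
        have "a c = 0" using fun_cong[OF H, of c] c unfolding fs_quot_def by simp
        then show "Yon t n a (Suc n) (egen n) c = 0" using Yon_e[OF c, of a] by simp
      qed
    qed
  qed
qed

end
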